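(* Let $K$ be an algebraically closed field, $Q$ a quiver with vertex set $I$, $v\in I$ and $\lambda\in K^I$. Let $Q_\infty$ be the quiver obtained from $Q$ by adjoining a new vertex $\infty$ and a new arrow $a\colon\infty\to v$, and extend $\lambda$ to $K^{I\cup\{\infty\}}$ by $\lambda_\infty=0$. Let $S(\infty)$ be the simple $\Pi^\lambda Q_\infty$-module which is one-dimensional at $\infty$ and zero at all other vertices, and let $\mathcal C$ be the category of $\Pi^\lambda Q_\infty$-modules $X$ with $\operatorname{Hom}(X,S(\infty))=\operatorname{Hom}(S(\infty),X)=0$. Then the forgetful functor from representations of $\overline{Q_\infty}$ to representations of $\bar Q$ (forgetting the vertex $\infty$ and the arrows $a,a^*$) induces an equivalence from the full subcategory of finite-dimensional $X\in\mathcal C$ with $\dim X_\infty\le 1$ to the category of nearly representations of $\Pi^\lambda Q$ with respect to $v$.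
   Context: For a quiver $Q$ with vertex set $I$, each arrow $a$ has tail $t(a)$ and head $h(a)$. The double $\bar Q$ is obtained by adjoining an arrow $a^*\colon h(a)\to t(a)$ for each arrow $a$ of $Q$. For $\lambda\in K^I$ and a finite-dimensional representation $X$ of $\bar Q$ define, for each $i\in I$, $$X_{c,i}=\sum_{a\in Q,\,h(a)=i}X_aX_{a^*}-\sum_{a\in Q,\,t(a)=i}X_{a^*}X_a-\lambda_i 1_{X_i}.$$ The deformed preprojective algebra $\Pi^\lambda Q$ is $K\bar Q$ modulo the relation $\sum_{a\in Q}(aa^*-a^*a)-\sum_i\lambda_ie_i$; its modules are the representations $X$ of $\bar Q$ with $X_{c,i}=0$ for all $i$. Write $\lambda\cdot\alpha=\sum_i\lambda_i\alpha_i$. A nearly representation of $\Pi^\lambda Q$ (with respect to $v$) is a finite-dimensional representation $X$ of $\bar Q$ with $\lambda\cdot\underline{\dim}\,X=0$, $X_{c,i}=0$ for all $i\ne v$, and $\operatorname{rank}(X_{c,v})\le 1$; morphisms of nearly representations are morphisms of $\bar Q$-representations. *)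

theory Defs
  imports "Jordan_Normal_Form.DL_Rank" "HOL-Computational_Algebra.Polynomial"
begin

definition alg_closed :: "'k::field itself \<Rightarrow> bool" where
  "alg_closed _ \<longleftrightarrow> (\<forall>p :: 'k poly. degree p > 0 \<longrightarrow> (\<exists>x. poly p x = 0))"

text \<open>A quiver is given by a finite vertex type 'v, a finite arrow type 'e and
  tail / head maps ta, ha :: 'e => 'v.
  A finite-dimensional representation of the double quiver (over a field 'k),
  with chosen bases, is a pair (d, M): d i is the dimension at vertex i and
  M a False is the matrix of the arrow a : ta a -> ha a, M a True the matrix of
  the adjoined arrow a* : ha a -> ta a.\<close>

type_synonym ('v, 'e, 'k) rep = "('v \<Rightarrow> nat) \<times> ('e \<Rightarrow> bool \<Rightarrow> 'k mat)"

definition is_rep :: "('e \<Rightarrow> 'v) \<Rightarrow> ('e \<Rightarrow> 'v) \<Rightarrow> ('v, 'e, 'k) rep \<Rightarrow> bool" where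
  "is_rep ta ha X \<longleftrightarrow>
     (\<forall>a. snd X a False \<in> carrier_mat (fst X (ha a)) (fst X (ta a))
        \<and> snd X a True \<in> carrier_mat (fst X (ta a)) (fst X (ha a)))"

definition Xc :: "('e::finite \<Rightarrow> 'v) \<Rightarrow> ('e \<Rightarrow> 'v) \<Rightarrow> ('v \<Rightarrow> 'k::field) \<Rightarrow> ('v, 'e, 'k) rep \<Rightarrow> 'v \<Rightarrow> 'k mat" where
  "Xc ta ha lam X i =
     mat (fst X i) (fst X i) (\<lambda>(p, q).
        (\<Sum>a\<in>{a. ha a = i}. (snd X a False * snd X a True) $$ (p, q))
      - (\<Sum>a\<in>{a. ta a = i}. (snd X a True * snd X a False) $$ (p, q))
      - (if p = q then lam i else 0))"

definition is_hom :: "('e \<Rightarrow> 'v) \<Rightarrow> ('e \<Rightarrow> 'v) \<Rightarrow> ('v, 'e, 'k::field) rep \<Rightarrow> ('v, 'e, 'k) rep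
    \<Rightarrow> ('v \<Rightarrow> 'k mat) \<Rightarrow> bool" where
  "is_hom ta ha X Y f \<longleftrightarrow>
     (\<forall>i. f i \<in> carrier_mat (fst Y i) (fst X i))
   \<and> (\<forall>a. f (ha a) * snd X a False = snd Y a False * f (ta a)
        \<and> f (ta a) * snd X a True = snd Y a True * f (ha a))"

definition zero_hom :: "('v, 'e, 'k::field) rep \<Rightarrow> ('v, 'e, 'k) rep \<Rightarrow> ('v \<Rightarrow> 'k mat)" where
  "zero_hom X Y = (\<lambda>i. 0\<^sub>m (fst Y i) (fst X i))"

definition rep_iso :: "('e \<Rightarrow> 'v) \<Rightarrow> ('e \<Rightarrow> 'v) \<Rightarrow> ('v, 'e, 'k::field) rep \<Rightarrow> ('v, 'e, 'k) rep \<Rightarrow> bool" where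
  "rep_iso ta ha X Y \<longleftrightarrow> (\<exists>f g. is_hom ta ha X Y f \<and> is_hom ta ha Y X g
      \<and> (\<forall>i. g i * f i = 1\<^sub>m (fst X i) \<and> f i * g i = 1\<^sub>m (fst Y i)))"

definition is_Pi_module :: "('e::finite \<Rightarrow> 'v) \<Rightarrow> ('e \<Rightarrow> 'v) \<Rightarrow> ('v \<Rightarrow> 'k::field) \<Rightarrow> ('v, 'e, 'k) rep \<Rightarrow> bool" where
  "is_Pi_module ta ha lam X \<longleftrightarrow> is_rep ta ha X \<and> (\<forall>i. Xc ta ha lam X i = 0\<^sub>m (fst X i) (fst X i))"

definition is_nearly :: "('e::finite \<Rightarrow> 'v::finite) \<Rightarrow> ('e \<Rightarrow> 'v) \<Rightarrow> ('v \<Rightarrow> 'k::field) \<Rightarrow> 'v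
    \<Rightarrow> ('v, 'e, 'k) rep \<Rightarrow> bool" where
  "is_nearly ta ha lam v X \<longleftrightarrow> is_rep ta ha X
     \<and> (\<Sum>i\<in>UNIV. lam i * of_nat (fst X i)) = 0
     \<and> (\<forall>i. i \<noteq> v \<longrightarrow> Xc ta ha lam X i = 0\<^sub>m (fst X i) (fst X i))
     \<and> vec_space.rank (fst X v) (Xc ta ha lam X v) \<le> 1"

text \<open>The quiver Q_infinity: vertices 'v option (None = infinity), arrows 'e option
  (None = the new arrow a : infinity -> v); lambda extended by 0 at infinity.\<close>
definition tl_inf :: "('e \<Rightarrow> 'v) \<Rightarrow> 'e option \<Rightarrow> 'v option" where
  "tl_inf ta a = (case a of None \<Rightarrow> None | Some b \<Rightarrow> Some (ta b))"

definition hd_inf :: "('e \<Rightarrow> 'v) \<Rightarrow> 'v \<Rightarrow> 'e option \<Rightarrow> 'v option" where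
  "hd_inf ha v a = (case a of None \<Rightarrow> Some v | Some b \<Rightarrow> Some (ha b))"

definition lam_inf :: "('v \<Rightarrow> 'k::zero) \<Rightarrow> 'v option \<Rightarrow> 'k" where
  "lam_inf lam i = (case i of None \<Rightarrow> 0 | Some j \<Rightarrow> lam j)"

definition S_dim :: "'v option \<Rightarrow> nat" where
  "S_dim i = (if i = None then 1 else 0)"

definition S_inf :: "('e \<Rightarrow> 'v) \<Rightarrow> ('e \<Rightarrow> 'v) \<Rightarrow> 'v \<Rightarrow> ('v option, 'e option, 'k::field) rep" where
  "S_inf ta ha v = (S_dim, (\<lambda>a b. if b then 0\<^sub>m (S_dim (tl_inf ta a)) (S_dim (hd_inf ha v a))
                                else 0\<^sub>m (S_dim (hd_inf ha v a)) (S_dim (tl_inf ta a))))"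

definition C_obj :: "('e::finite \<Rightarrow> 'v) \<Rightarrow> ('e \<Rightarrow> 'v) \<Rightarrow> ('v \<Rightarrow> 'k::field) \<Rightarrow> 'v
    \<Rightarrow> ('v option, 'e option, 'k) rep \<Rightarrow> bool" where
  "C_obj ta ha lam v X \<longleftrightarrow>
     is_Pi_module (tl_inf ta) (hd_inf ha v) (lam_inf lam) X
   \<and> (\<forall>f. is_hom (tl_inf ta) (hd_inf ha v) X (S_inf ta ha v) f \<longrightarrow> f = zero_hom X (S_inf ta ha v))
   \<and> (\<forall>f. is_hom (tl_inf ta) (hd_inf ha v) (S_inf ta ha v) X f \<longrightarrow> f = zero_hom (S_inf ta ha v) X)
   \<and> fst X None \<le> 1"

definition forget :: "('v option, 'e option, 'k) rep \<Rightarrow> ('v, 'e, 'k) rep" where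
  "forget X = (fst X \<circ> Some, \<lambda>a b. snd X (Some a) b)"

definition forget_hom :: "('v option \<Rightarrow> 'k mat) \<Rightarrow> ('v \<Rightarrow> 'k mat)" where
  "forget_hom f = f \<circ> Some"

end

theory Submission
  imports Defs
begin


lemma mult_entry:
  assumes "A \<in> carrier_mat m n" "B \<in> carrier_mat n r" "p < m" "q < r"
  shows "(A * B) $$ (p,q) = (\<Sum>k=0..<n. A $$ (p,k) * B $$ (k,q))"
  using assms by (auto simp: index_mult_mat scalar_prod_def intro!: sum.cong)

lemma zero_rows_eq: "A \<in> carrier_mat 0 n \<Longrightarrow> B \<in> carrier_mat 0 n \<Longrightarrow> A = B"
  by (rule eq_matI) auto
lemma zero_cols_eq: "A \<in> carrier_mat n 0 \<Longrightarrow> B \<in> carrier_mat n 0 \<Longrightarrow> A = B"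
  by (rule eq_matI) auto

lemma sum_option_filter:
  fixes f :: "'e::finite option \<Rightarrow> 'a::comm_monoid_add"
  shows "(\<Sum>a\<in>{a. P a}. f a) = (if P None then f None else 0) + (\<Sum>b\<in>{b. P (Some b)}. f (Some b))"
proof -
  have "{a. P a} = (if P None then {None} else {}) \<union> Some ` {b. P (Some b)}"
    apply (rule Set.set_eqI)
    subgoal for x by (cases x) auto
    done
  moreover have "(\<Sum>a\<in>Some ` {b. P (Some b)}. f a) = (\<Sum>b\<in>{b. P (Some b)}. f (Some b))"
    by (simp add: sum.reindex)
  ultimately show ?thesis
    by (cases "P None") (auto simp: sum.union_disjoint)
qed

lemma fiber_sum:
  fixes h :: "'e::finite \<Rightarrow> 'v::finite" and g :: "'e \<Rightarrow> 'a::comm_monoid_add"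
  shows "(\<Sum>i\<in>UNIV. \<Sum>a\<in>{a. h a = i}. g a) = (\<Sum>a\<in>UNIV. g a)"
  using sum.group[of UNIV UNIV h g] by simp

lemma tr_comm:
  fixes A B :: "'a::comm_ring mat"
  assumes "A \<in> carrier_mat n m" "B \<in> carrier_mat m n"
  shows "(\<Sum>p=0..<n. (A*B) $$ (p,p)) = (\<Sum>q=0..<m. (B*A) $$ (q,q))"
proof -
  have "(\<Sum>p=0..<n. (A*B) $$ (p,p)) = (\<Sum>p=0..<n. \<Sum>q=0..<m. A$$(p,q) * B$$(q,p))"
    by (intro sum.cong refl) (metis mult_entry[OF assms] atLeastLessThan_iff)
  also have "\<dots> = (\<Sum>q=0..<m. \<Sum>p=0..<n. B$$(q,p) * A$$(p,q))"
    by (subst sum.swap) (intro sum.cong refl mult.commute)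
  also have "\<dots> = (\<Sum>q=0..<m. (B*A) $$ (q,q))"
    by (intro sum.cong refl) (metis mult_entry[OF assms(2,1)] atLeastLessThan_iff)
  finally show ?thesis .
qed

lemma Xc_Some:
  fixes ta ha :: "'e::finite \<Rightarrow> 'v" and lam :: "'v \<Rightarrow> 'k::field"
  assumes "p < fst X (Some i)" "q < fst X (Some i)"
  shows "Xc (tl_inf ta) (hd_inf ha v) (lam_inf lam) X (Some i) $$ (p,q)
    = Xc ta ha lam (forget X) i $$ (p,q) + (if i = v then (snd X None False * snd X None True) $$ (p,q) else 0)"
  using assms unfolding Xc_def by (simp add: sum_option_filter tl_inf_def hd_inf_def lam_inf_def forget_def)

lemma Xc_None:
  fixes ta ha :: "'e::finite \<Rightarrow> 'v" and lam :: "'v \<Rightarrow> 'k::field"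
  assumes "p < fst X None" "q < fst X None"
  shows "Xc (tl_inf ta) (hd_inf ha v) (lam_inf lam) X None $$ (p,q)
    = - (snd X None True * snd X None False) $$ (p,q)"
  using assms unfolding Xc_def by (simp add: sum_option_filter tl_inf_def hd_inf_def lam_inf_def)

lemma trace_sum:
  fixes ta ha :: "'e::finite \<Rightarrow> 'v::finite" and lam :: "'v \<Rightarrow> 'k::field"
  assumes rep: "is_rep ta ha X"
  shows "(\<Sum>i\<in>UNIV. \<Sum>p=0..<fst X i. Xc ta ha lam X i $$ (p,p)) = - (\<Sum>i\<in>UNIV. lam i * of_nat (fst X i))"
proof -
  define t1 where "t1 a = (\<Sum>p=0..<fst X (ha a). (snd X a False * snd X a True) $$ (p,p))" for a
  define t2 where "t2 a = (\<Sum>p=0..<fst X (ta a). (snd X a True * snd X a False) $$ (p,p))" for a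
  have c: "snd X a False \<in> carrier_mat (fst X (ha a)) (fst X (ta a))"
      "snd X a True \<in> carrier_mat (fst X (ta a)) (fst X (ha a))" for a
    using rep unfolding is_rep_def by auto
  have t12: "t1 a = t2 a" for a
    unfolding t1_def t2_def by (rule tr_comm[OF c])
  have e: "(\<Sum>p=0..<fst X i. Xc ta ha lam X i $$ (p,p))
     = (\<Sum>a\<in>{a. ha a = i}. t1 a) - (\<Sum>a\<in>{a. ta a = i}. t2 a) - lam i * of_nat (fst X i)" for i
  proof -
    have "(\<Sum>p=0..<fst X i. Xc ta ha lam X i $$ (p,p))
      = (\<Sum>p=0..<fst X i. (\<Sum>a\<in>{a. ha a = i}. (snd X a False * snd X a True) $$ (p, p))
          - (\<Sum>a\<in>{a. ta a = i}. (snd X a True * snd X a False) $$ (p, p)) - lam i)"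
      unfolding Xc_def by (intro sum.cong refl) simp
    also have "\<dots> = (\<Sum>a\<in>{a. ha a = i}. \<Sum>p=0..<fst X i. (snd X a False * snd X a True) $$ (p, p))
          - (\<Sum>a\<in>{a. ta a = i}. \<Sum>p=0..<fst X i. (snd X a True * snd X a False) $$ (p, p))
          - lam i * of_nat (fst X i)"
      by (simp add: sum_subtractf sum.swap[of _ _ "{a. ha a = i}"] sum.swap[of _ _ "{a. ta a = i}"] mult.commute)
    also have "\<dots> = (\<Sum>a\<in>{a. ha a = i}. t1 a) - (\<Sum>a\<in>{a. ta a = i}. t2 a) - lam i * of_nat (fst X i)"
      unfolding t1_def t2_def by simp
    finally show ?thesis .
  qed
  have "(\<Sum>i\<in>UNIV. \<Sum>p=0..<fst X i. Xc ta ha lam X i $$ (p,p))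
     = (\<Sum>i\<in>UNIV. \<Sum>a\<in>{a. ha a = i}. t1 a) - (\<Sum>i\<in>UNIV. \<Sum>a\<in>{a. ta a = i}. t2 a) - (\<Sum>i\<in>UNIV. lam i * of_nat (fst X i))"
    unfolding e by (simp add: sum_subtractf)
  also have "\<dots> = - (\<Sum>i\<in>UNIV. lam i * of_nat (fst X i))"
    unfolding fiber_sum t12 by simp
  finally show ?thesis .
qed

lemma distribL:
  fixes c :: "nat \<Rightarrow> 'k::field"
  assumes "finite K" "finite A" "finite B" "q \<in> K"
  shows "(\<Sum>k\<in>K. c k * ((\<Sum>a\<in>A. P a k) - (\<Sum>a\<in>B. Q a k) - (if k = q then l else 0)))
     = (\<Sum>a\<in>A. \<Sum>k\<in>K. c k * P a k) - (\<Sum>a\<in>B. \<Sum>k\<in>K. c k * Q a k) - l * c q"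
proof -
  have "(\<Sum>k\<in>K. c k * ((\<Sum>a\<in>A. P a k) - (\<Sum>a\<in>B. Q a k) - (if k = q then l else 0)))
     = (\<Sum>k\<in>K. \<Sum>a\<in>A. c k * P a k) - (\<Sum>k\<in>K. \<Sum>a\<in>B. c k * Q a k) - (\<Sum>k\<in>K. c k * (if k = q then l else 0))"
    by (simp add: right_diff_distrib sum_subtractf sum_distrib_left)
  also have "(\<Sum>k\<in>K. c k * (if k = q then l else 0)) = l * c q"
    using assms by (simp add: if_distrib[of "\<lambda>x. _ * x"] cong: if_cong)
  also have "(\<Sum>k\<in>K. \<Sum>a\<in>A. c k * P a k) = (\<Sum>a\<in>A. \<Sum>k\<in>K. c k * P a k)" by (rule sum.swap)
  also have "(\<Sum>k\<in>K. \<Sum>a\<in>B. c k * Q a k) = (\<Sum>a\<in>B. \<Sum>k\<in>K. c k * Q a k)" by (rule sum.swap)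
  finally show ?thesis by simp
qed
lemma distribR:
  fixes c :: "nat \<Rightarrow> 'k::field"
  assumes "finite K" "finite A" "finite B" "p \<in> K"
  shows "(\<Sum>k\<in>K. ((\<Sum>a\<in>A. P a k) - (\<Sum>a\<in>B. Q a k) - (if p = k then l else 0)) * c k)
     = (\<Sum>a\<in>A. \<Sum>k\<in>K. P a k * c k) - (\<Sum>a\<in>B. \<Sum>k\<in>K. Q a k * c k) - l * c p"
proof -
  have "(\<Sum>k\<in>K. ((\<Sum>a\<in>A. P a k) - (\<Sum>a\<in>B. Q a k) - (if p = k then l else 0)) * c k)
     = (\<Sum>k\<in>K. \<Sum>a\<in>A. P a k * c k) - (\<Sum>k\<in>K. \<Sum>a\<in>B. Q a k * c k) - (\<Sum>k\<in>K. (if p = k then l else 0) * c k)"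
    by (simp add: left_diff_distrib sum_subtractf sum_distrib_right)
  also have "(\<Sum>k\<in>K. (if p = k then l else 0) * c k) = l * c p"
    using assms by (simp add: if_distrib[of "\<lambda>x. x * _"] cong: if_cong)
  also have "(\<Sum>k\<in>K. \<Sum>a\<in>A. P a k * c k) = (\<Sum>a\<in>A. \<Sum>k\<in>K. P a k * c k)" by (rule sum.swap)
  also have "(\<Sum>k\<in>K. \<Sum>a\<in>B. Q a k * c k) = (\<Sum>a\<in>B. \<Sum>k\<in>K. Q a k * c k)" by (rule sum.swap)
  finally show ?thesis by simp
qed


lemma hom_Xc:
  fixes ta ha :: "'e::finite \<Rightarrow> 'v" and lam :: "'v \<Rightarrow> 'k::field"
  assumes rX: "is_rep ta ha X" and rY: "is_rep ta ha Y" and h: "is_hom ta ha X Y g"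
  shows "g i * Xc ta ha lam X i = Xc ta ha lam Y i * g i"
proof -
  let ?n = "fst X i" and ?m = "fst Y i"
  have cX: "snd X a False \<in> carrier_mat (fst X (ha a)) (fst X (ta a))"
      "snd X a True \<in> carrier_mat (fst X (ta a)) (fst X (ha a))" for a
    using rX unfolding is_rep_def by auto
  have cY: "snd Y a False \<in> carrier_mat (fst Y (ha a)) (fst Y (ta a))"
      "snd Y a True \<in> carrier_mat (fst Y (ta a)) (fst Y (ha a))" for a
    using rY unfolding is_rep_def by auto
  have cg: "g j \<in> carrier_mat (fst Y j) (fst X j)" for j using h unfolding is_hom_def by auto
  have hF: "g (ha a) * snd X a False = snd Y a False * g (ta a)"
   and hT: "g (ta a) * snd X a True = snd Y a True * g (ha a)" for a
    using h unfolding is_hom_def by auto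
  have e1: "g (ha a) * (snd X a False * snd X a True) = (snd Y a False * snd Y a True) * g (ha a)" for a
  proof -
    have "g (ha a) * (snd X a False * snd X a True) = (g (ha a) * snd X a False) * snd X a True"
      by (rule assoc_mult_mat[OF cg cX(1) cX(2), symmetric])
    also have "\<dots> = snd Y a False * (g (ta a) * snd X a True)" unfolding hF
      by (rule assoc_mult_mat[OF cY(1) cg cX(2)])
    also have "\<dots> = (snd Y a False * snd Y a True) * g (ha a)" unfolding hT
      by (rule assoc_mult_mat[OF cY(1) cY(2) cg, symmetric])
    finally show ?thesis .
  qed
  have e2: "g (ta a) * (snd X a True * snd X a False) = (snd Y a True * snd Y a False) * g (ta a)" for a
  proof -
    have "g (ta a) * (snd X a True * snd X a False) = (g (ta a) * snd X a True) * snd X a False"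
      by (rule assoc_mult_mat[OF cg cX(2) cX(1), symmetric])
    also have "\<dots> = snd Y a True * (g (ha a) * snd X a False)" unfolding hT
      by (rule assoc_mult_mat[OF cY(2) cg cX(1)])
    also have "\<dots> = (snd Y a True * snd Y a False) * g (ta a)" unfolding hF
      by (rule assoc_mult_mat[OF cY(2) cY(1) cg, symmetric])
    finally show ?thesis .
  qed
  show ?thesis
  proof (rule eq_matI)
    fix p q assume p: "p < dim_row (Xc ta ha lam Y i * g i)" and q: "q < dim_col (Xc ta ha lam Y i * g i)"
    have p': "p < ?m" and q': "q < ?n" using p q cg[of i] by (auto simp: Xc_def)
    have XcX: "Xc ta ha lam X i \<in> carrier_mat ?n ?n" and XcY: "Xc ta ha lam Y i \<in> carrier_mat ?m ?m"
      by (auto simp: Xc_def)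
    have "(g i * Xc ta ha lam X i) $$ (p,q) = (\<Sum>k=0..<?n. g i $$ (p,k) * Xc ta ha lam X i $$ (k,q))"
      by (rule mult_entry[OF cg XcX p' q'])
    also have "\<dots> = (\<Sum>k=0..<?n. g i $$ (p,k) * ((\<Sum>a\<in>{a. ha a = i}. (snd X a False * snd X a True) $$ (k, q))
          - (\<Sum>a\<in>{a. ta a = i}. (snd X a True * snd X a False) $$ (k, q)) - (if k = q then lam i else 0)))"
      using q' unfolding Xc_def by (intro sum.cong refl) simp
    also have "\<dots> = (\<Sum>a\<in>{a. ha a = i}. \<Sum>k=0..<?n. g i $$ (p,k) * (snd X a False * snd X a True) $$ (k, q))
          - (\<Sum>a\<in>{a. ta a = i}. \<Sum>k=0..<?n. g i $$ (p,k) * (snd X a True * snd X a False) $$ (k, q))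
          - lam i * g i $$ (p,q)"
      by (rule distribL[where K="{0..<?n}" and A="{a. ha a = i}" and B="{a. ta a = i}" and q=q
           and c="\<lambda>k. g i $$ (p,k)" and P="\<lambda>a k. (snd X a False * snd X a True) $$ (k, q)"
           and Q="\<lambda>a k. (snd X a True * snd X a False) $$ (k, q)" and l="lam i"]) (use q' in auto)
    also have "\<dots> = (\<Sum>a\<in>{a. ha a = i}. ((snd Y a False * snd Y a True) * g i) $$ (p, q))
          - (\<Sum>a\<in>{a. ta a = i}. ((snd Y a True * snd Y a False) * g i) $$ (p, q))
          - lam i * g i $$ (p,q)"
    proof -
      have h1: "(\<Sum>k=0..<?n. g i $$ (p,k) * (snd X a False * snd X a True) $$ (k, q))
          = ((snd Y a False * snd Y a True) * g i) $$ (p, q)" if "ha a = i" for a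
      proof -
        have c: "snd X a False * snd X a True \<in> carrier_mat ?n ?n" using cX[of a] that by auto
        have "(\<Sum>k=0..<?n. g i $$ (p,k) * (snd X a False * snd X a True) $$ (k, q))
           = (g i * (snd X a False * snd X a True)) $$ (p,q)"
          by (rule mult_entry[OF cg c p' q', symmetric])
        also have "\<dots> = ((snd Y a False * snd Y a True) * g i) $$ (p, q)"
          using e1[of a] that by simp
        finally show ?thesis .
      qed
      have h2: "(\<Sum>k=0..<?n. g i $$ (p,k) * (snd X a True * snd X a False) $$ (k, q))
          = ((snd Y a True * snd Y a False) * g i) $$ (p, q)" if "ta a = i" for a
      proof -
        have c: "snd X a True * snd X a False \<in> carrier_mat ?n ?n" using cX[of a] that by auto
        have "(\<Sum>k=0..<?n. g i $$ (p,k) * (snd X a True * snd X a False) $$ (k, q))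
           = (g i * (snd X a True * snd X a False)) $$ (p,q)"
          by (rule mult_entry[OF cg c p' q', symmetric])
        also have "\<dots> = ((snd Y a True * snd Y a False) * g i) $$ (p, q)"
          using e2[of a] that by simp
        finally show ?thesis .
      qed
      show ?thesis by (intro arg_cong2[where f="(-)"] refl sum.cong) (simp_all add: h1 h2)
    qed
    also have "\<dots> = (\<Sum>a\<in>{a. ha a = i}. \<Sum>k=0..<?m. (snd Y a False * snd Y a True) $$ (p, k) * g i $$ (k,q))
          - (\<Sum>a\<in>{a. ta a = i}. \<Sum>k=0..<?m. (snd Y a True * snd Y a False) $$ (p, k) * g i $$ (k,q))
          - lam i * g i $$ (p,q)"
    proof -
      have h1: "((snd Y a False * snd Y a True) * g i) $$ (p, q) = (\<Sum>k=0..<?m. (snd Y a False * snd Y a True) $$ (p, k) * g i $$ (k,q))"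
        if "ha a = i" for a
      proof -
        have c: "snd Y a False * snd Y a True \<in> carrier_mat ?m ?m" using cY[of a] that by auto
        show ?thesis by (rule mult_entry[OF c cg p' q'])
      qed
      have h2: "((snd Y a True * snd Y a False) * g i) $$ (p, q) = (\<Sum>k=0..<?m. (snd Y a True * snd Y a False) $$ (p, k) * g i $$ (k,q))"
        if "ta a = i" for a
      proof -
        have c: "snd Y a True * snd Y a False \<in> carrier_mat ?m ?m" using cY[of a] that by auto
        show ?thesis by (rule mult_entry[OF c cg p' q'])
      qed
      show ?thesis by (intro arg_cong2[where f="(-)"] refl sum.cong) (simp_all add: h1 h2)
    qed
    also have "\<dots> = (\<Sum>k=0..<?m. ((\<Sum>a\<in>{a. ha a = i}. (snd Y a False * snd Y a True) $$ (p, k))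
          - (\<Sum>a\<in>{a. ta a = i}. (snd Y a True * snd Y a False) $$ (p, k)) - (if p = k then lam i else 0)) * g i $$ (k,q))"
      by (rule distribR[where K="{0..<?m}" and A="{a. ha a = i}" and B="{a. ta a = i}" and p=p
           and c="\<lambda>k. g i $$ (k,q)" and P="\<lambda>a k. (snd Y a False * snd Y a True) $$ (p, k)"
           and Q="\<lambda>a k. (snd Y a True * snd Y a False) $$ (p, k)" and l="lam i", symmetric]) (use p' in auto)
    also have "\<dots> = (\<Sum>k=0..<?m. Xc ta ha lam Y i $$ (p,k) * g i $$ (k,q))"
      using p' unfolding Xc_def by (intro sum.cong refl) simp
    also have "\<dots> = (Xc ta ha lam Y i * g i) $$ (p,q)"
      by (rule mult_entry[OF XcY cg p' q', symmetric])
    finally show "(g i * Xc ta ha lam X i) $$ (p,q) = (Xc ta ha lam Y i * g i) $$ (p,q)" .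
  qed (use cg[of i] in \<open>auto simp: Xc_def\<close>)
qed


lemma (in vec_space) rank_le1_decomp:
  assumes A: "A \<in> carrier_mat n nc" and r: "rank A \<le> 1"
  shows "\<exists>f g. \<forall>i<n. \<forall>j<nc. A $$ (i,j) = f i * g j"
proof (cases "\<forall>i<n. \<forall>j<nc. A $$ (i,j) = 0")
  case True then show ?thesis by (intro exI[of _ "\<lambda>_. 0"]) auto
next
  case False
  then obtain i0 j0 where i0: "i0 < n" and j0: "j0 < nc" and nz: "A $$ (i0,j0) \<noteq> 0" by auto
  have minor: "A $$ (i,j) * A $$ (i0,j0) = A $$ (i,j0) * A $$ (i0,j)" if i: "i < n" and j: "j < nc" for i j
  proof (rule ccontr)
    assume ne: "A $$ (i,j) * A $$ (i0,j0) \<noteq> A $$ (i,j0) * A $$ (i0,j)"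
    define u where "u = col A j0"
    define w where "w = col A j"
    have ui: "u $ k = A $$ (k, j0)" "w $ k = A $$ (k,j)" if "k < n" for k
      using that A i j j0 by (auto simp: u_def w_def)
    have uw: "u \<noteq> w"
    proof
      assume "u = w"
      then have "A $$ (i, j0) = A $$ (i,j)" "A $$ (i0, j0) = A $$ (i0,j)" using ui i i0 by metis+
      then show False using ne by (simp add: mult.commute)
    qed
    have uc: "u \<in> carrier_vec n" "w \<in> carrier_vec n" using A j j0 by (auto simp: u_def w_def)
    have indep: "\<not> lin_dep {u, w}"
    proof
      assume dep: "lin_dep {u,w}"
      define B where "B = mat_of_cols n [u,w]"
      have B: "B \<in> carrier_mat n 2" unfolding B_def using mat_of_cols_carrier(1)[of n "[u,w]"] by (simp add: numeral_2_eq_2)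
      have cB: "cols B = [u,w]" using uc by (simp add: B_def)
      obtain x where x: "x \<in> carrier_vec 2" "x \<noteq> 0\<^sub>v 2" "B *\<^sub>v x = 0\<^sub>v n"
        using lin_depE[OF B] dep cB uw by auto
      have Bk: "B $$ (k,0) = u $ k" "B $$ (k,1) = w $ k" if "k < n" for k
        using that uc by (auto simp: B_def mat_of_cols_def)
      have eq: "u $ k * x $ 0 + w $ k * x $ 1 = 0" if k: "k < n" for k
      proof -
        have "(B *\<^sub>v x) $ k = 0" using x(3) k by simp
        moreover have "(B *\<^sub>v x) $ k = (\<Sum>l\<in>{0..<2}. B $$ (k,l) * x $ l)"
          using B x(1) k by (auto simp: scalar_prod_def intro!: sum.cong)
        moreover have "(\<Sum>l\<in>{0..<2::nat}. B $$ (k,l) * x $ l) = B $$ (k,0) * x $ 0 + B $$ (k,1) * x $ 1"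
          by (simp add: numeral_2_eq_2)
        ultimately show ?thesis using Bk k by simp
      qed
      define a where "a = A $$ (i0,j0)" define b where "b = A $$ (i0,j)"
      define c where "c = A $$ (i,j0)" define d where "d = A $$ (i,j)"
      have e1: "a * x $ 0 + b * x $ 1 = 0" using eq[OF i0] ui i0 by (simp add: a_def b_def)
      have e2: "c * x $ 0 + d * x $ 1 = 0" using eq[OF i] ui i by (simp add: c_def d_def)
      have det: "d * a - c * b \<noteq> 0" using ne by (simp add: a_def b_def c_def d_def)
      have "(d * a - c * b) * x $ 0 = d * (a * x $ 0 + b * x $ 1) - b * (c * x $ 0 + d * x $ 1)"
        by (simp add: algebra_simps)
      then have x0: "x $ 0 = 0" using e1 e2 det by simp
      have "(d * a - c * b) * x $ 1 = a * (c * x $ 0 + d * x $ 1) - c * (a * x $ 0 + b * x $ 1)"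
        by (simp add: algebra_simps)
      then have x1: "x $ 1 = 0" using e1 e2 det by simp
      have "x = 0\<^sub>v 2"
      proof (rule eq_vecI)
        fix k assume "k < dim_vec (0\<^sub>v 2 :: 'a vec)"
        then have "k = 0 \<or> k = 1" by auto
        then show "x $ k = 0\<^sub>v 2 $ k" using x0 x1 by auto
      qed (use x(1) in auto)
      with x(2) show False by simp
    qed
    have "{u,w} \<subseteq> set (cols A)"
    proof -
      have "col A k \<in> set (cols A)" if "k < nc" for k
        using that A by (metis cols_length cols_nth carrier_matD(2) nth_mem)
      then show ?thesis using j j0 unfolding u_def w_def by auto
    qed
    then have "card {u,w} \<le> rank A" using rank_ge_card_indpt[OF A _ indep] by auto
    with uw r show False by simp
  qed
  show ?thesis
    apply (rule exI[of _ "\<lambda>i. A $$ (i,j0)"], rule exI[of _ "\<lambda>j. A $$ (i0,j) / A $$ (i0,j0)"])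
    using minor nz by (auto simp: field_simps)
qed


lemma inner0_mult: "A \<in> carrier_mat n 0 \<Longrightarrow> B \<in> carrier_mat 0 m \<Longrightarrow> A * B = 0\<^sub>m n m"
  by (rule eq_matI) (auto simp: scalar_prod_def)

lemma S_fst[simp]: "fst (S_inf ta ha v) = S_dim" by (simp add: S_inf_def)
lemma S_snd[simp]: "snd (S_inf ta ha v) a b = (if b then 0\<^sub>m (S_dim (tl_inf ta a)) (S_dim (hd_inf ha v a))
                                else 0\<^sub>m (S_dim (hd_inf ha v a)) (S_dim (tl_inf ta a)))"
  by (simp add: S_inf_def)

lemma rep_inf_carrier:
  assumes "is_rep (tl_inf ta) (hd_inf ha v) X"
  shows "snd X None False \<in> carrier_mat (fst X (Some v)) (fst X None)"
    "snd X None True \<in> carrier_mat (fst X None) (fst X (Some v))"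
    "snd X (Some b) False \<in> carrier_mat (fst X (Some (ha b))) (fst X (Some (ta b)))"
    "snd X (Some b) True \<in> carrier_mat (fst X (Some (ta b))) (fst X (Some (ha b)))"
  using assms unfolding is_rep_def
  by (auto simp: tl_inf_def hd_inf_def dest: spec[of _ None] spec[of _ "Some b"])

lemma Cobj_rep: "C_obj ta ha lam v X \<Longrightarrow> is_rep (tl_inf ta) (hd_inf ha v) X"
  unfolding C_obj_def is_Pi_module_def by auto

lemma Cobj_B_nz:
  fixes ta ha :: "'e::finite \<Rightarrow> 'v" and lam :: "'v \<Rightarrow> 'k::field"
  assumes C: "C_obj ta ha lam v X" and d: "fst X None = 1"
  shows "\<exists>q < fst X (Some v). snd X None True $$ (0,q) \<noteq> 0"
proof (rule ccontr)
  assume "\<not> ?thesis"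
  then have z: "snd X None True = 0\<^sub>m 1 (fst X (Some v))"
    using rep_inf_carrier(2)[OF Cobj_rep[OF C]] d by (intro eq_matI) auto
  note c = rep_inf_carrier[OF Cobj_rep[OF C]]
  define f :: "'v option \<Rightarrow> 'k mat" where "f i = (if i = None then 1\<^sub>m 1 else 0\<^sub>m 0 (fst X i))" for i
  have "is_hom (tl_inf ta) (hd_inf ha v) X (S_inf ta ha v) f"
    unfolding is_hom_def
  proof (rule conjI[OF allI allI])
    fix i show "f i \<in> carrier_mat (fst (S_inf ta ha v) i) (fst X i)"
      using d by (cases i) (auto simp: f_def S_dim_def)
  next
    fix a :: "'e option"
    show "f (hd_inf ha v a) * snd X a False = snd (S_inf ta ha v) a False * f (tl_inf ta a) \<and>
          f (tl_inf ta a) * snd X a True = snd (S_inf ta ha v) a True * f (hd_inf ha v a)"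
    proof (cases a)
      case None
      have 1: "f (Some v) * snd X None False = 0\<^sub>m 0 1 * f None"
        using c(1) d by (intro zero_rows_eq) (auto simp: f_def)
      have 2: "f None * snd X None True = 0\<^sub>m 1 0 * f (Some v)"
        using c(2) d z by (simp add: f_def)
      show ?thesis using None 1 2 by (simp add: tl_inf_def hd_inf_def S_dim_def)
    next
      case (Some b)
      have 1: "f (Some (ha b)) * snd X (Some b) False = 0\<^sub>m 0 0 * f (Some (ta b))"
        using c(3)[of b] by (intro zero_rows_eq) (auto simp: f_def)
      have 2: "f (Some (ta b)) * snd X (Some b) True = 0\<^sub>m 0 0 * f (Some (ha b))"
        using c(4)[of b] by (intro zero_rows_eq) (auto simp: f_def)
      show ?thesis using Some 1 2 by (simp add: tl_inf_def hd_inf_def S_dim_def)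
    qed
  qed
  then have "f = zero_hom X (S_inf ta ha v)" using C unfolding C_obj_def by blast
  then have "f None $$ (0,0) = zero_hom X (S_inf ta ha v) None $$ (0,0)" by simp
  then show False using d by (simp add: f_def zero_hom_def S_dim_def)
qed

lemma Cobj_A_nz:
  fixes ta ha :: "'e::finite \<Rightarrow> 'v" and lam :: "'v \<Rightarrow> 'k::field"
  assumes C: "C_obj ta ha lam v X" and d: "fst X None = 1"
  shows "\<exists>p < fst X (Some v). snd X None False $$ (p,0) \<noteq> 0"
proof (rule ccontr)
  assume "\<not> ?thesis"
  then have z: "snd X None False = 0\<^sub>m (fst X (Some v)) 1"
    using rep_inf_carrier(1)[OF Cobj_rep[OF C]] d by (intro eq_matI) auto
  note c = rep_inf_carrier[OF Cobj_rep[OF C]]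
  define f :: "'v option \<Rightarrow> 'k mat" where "f i = (if i = None then 1\<^sub>m 1 else 0\<^sub>m (fst X i) 0)" for i
  have "is_hom (tl_inf ta) (hd_inf ha v) (S_inf ta ha v) X f"
    unfolding is_hom_def
  proof (rule conjI[OF allI allI])
    fix i show "f i \<in> carrier_mat (fst X i) (fst (S_inf ta ha v) i)"
      using d by (cases i) (auto simp: f_def S_dim_def)
  next
    fix a :: "'e option"
    show "f (hd_inf ha v a) * snd (S_inf ta ha v) a False = snd X a False * f (tl_inf ta a) \<and>
          f (tl_inf ta a) * snd (S_inf ta ha v) a True = snd X a True * f (hd_inf ha v a)"
    proof (cases a)
      case None
      have 1: "f (Some v) * 0\<^sub>m 0 1 = snd X None False * f None"
        using c(1) d z by (simp add: f_def inner0_mult)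
      have 2: "f None * 0\<^sub>m 1 0 = snd X None True * f (Some v)"
        using c(2) d by (intro zero_cols_eq) (auto simp: f_def)
      show ?thesis using None 1 2 by (simp add: tl_inf_def hd_inf_def S_dim_def)
    next
      case (Some b)
      have 1: "f (Some (ha b)) * 0\<^sub>m 0 0 = snd X (Some b) False * f (Some (ta b))"
        using c(3)[of b] by (intro zero_cols_eq) (auto simp: f_def)
      have 2: "f (Some (ta b)) * 0\<^sub>m 0 0 = snd X (Some b) True * f (Some (ha b))"
        using c(4)[of b] by (intro zero_cols_eq) (auto simp: f_def)
      show ?thesis using Some 1 2 by (simp add: tl_inf_def hd_inf_def S_dim_def)
    qed
  qed
  then have "f = zero_hom (S_inf ta ha v) X" using C unfolding C_obj_def by blast
  then have "f None $$ (0,0) = zero_hom (S_inf ta ha v) X None $$ (0,0)" by simp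
  then show False using d by (simp add: f_def zero_hom_def S_dim_def)
qed


lemma sum_UNIV_option:
  fixes h :: "'v::finite option \<Rightarrow> 'a::comm_monoid_add"
  shows "(\<Sum>i\<in>UNIV. h i) = h None + (\<Sum>j\<in>UNIV. h (Some j))"
proof -
  have "(\<Sum>i\<in>UNIV. h i) = (\<Sum>i\<in>insert None (range Some). h i)" by (simp add: UNIV_option_conv)
  also have "\<dots> = h None + (\<Sum>i\<in>range Some. h i)" by (subst sum.insert) auto
  also have "(\<Sum>i\<in>range Some. h i) = (\<Sum>j\<in>UNIV. h (Some j))" by (simp add: sum.reindex)
  finally show ?thesis .
qed

lemma forget_fst: "fst (forget X) i = fst X (Some i)" by (simp add: forget_def)
lemma forget_snd: "snd (forget X) a b = snd X (Some a) b" by (simp add: forget_def)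

lemma part_obj:
  fixes ta ha :: "'e::finite \<Rightarrow> 'v::finite" and lam :: "'v \<Rightarrow> 'k::field"
  assumes C: "C_obj ta ha lam v X"
  shows "is_nearly ta ha lam v (forget X)"
proof -
  have rep: "is_rep (tl_inf ta) (hd_inf ha v) X" using Cobj_rep[OF C] .
  note c = rep_inf_carrier[OF rep]
  have Xc0: "Xc (tl_inf ta) (hd_inf ha v) (lam_inf lam) X i = 0\<^sub>m (fst X i) (fst X i)" for i
    using C unfolding C_obj_def is_Pi_module_def by auto
  have dinf: "fst X None \<le> 1" using C unfolding C_obj_def by auto
  have r1: "is_rep ta ha (forget X)"
    unfolding is_rep_def forget_def using c(3,4) by auto
  have "(\<Sum>i\<in>UNIV. \<Sum>p=0..<fst X i. Xc (tl_inf ta) (hd_inf ha v) (lam_inf lam) X i $$ (p,p))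
      = - (\<Sum>i\<in>UNIV. lam_inf lam i * of_nat (fst X i))"
    by (rule trace_sum[OF rep])
  moreover have "(\<Sum>i\<in>UNIV. \<Sum>p=0..<fst X i. Xc (tl_inf ta) (hd_inf ha v) (lam_inf lam) X i $$ (p,p)) = 0"
    unfolding Xc0 by simp
  ultimately have "(\<Sum>i\<in>UNIV. lam_inf lam i * of_nat (fst X i)) = 0" by simp
  then have r2: "(\<Sum>i\<in>UNIV. lam i * of_nat (fst (forget X) i)) = 0"
    unfolding sum_UNIV_option[of "\<lambda>i. lam_inf lam i * of_nat (fst X i)"] by (simp add: lam_inf_def forget_def)
  have ent: "Xc ta ha lam (forget X) i $$ (p,q) = - (if i = v then (snd X None False * snd X None True) $$ (p,q) else 0)"
    if "p < fst X (Some i)" "q < fst X (Some i)" for i p q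
    using Xc_Some[OF that, of ta ha v lam] Xc0[of "Some i"] that by (simp add: eq_neg_iff_add_eq_0)
  have r3: "Xc ta ha lam (forget X) i = 0\<^sub>m (fst (forget X) i) (fst (forget X) i)" if "i \<noteq> v" for i
    by (rule eq_matI) (use ent that in \<open>auto simp: Xc_def forget_def\<close>)
  have r4: "vec_space.rank (fst (forget X) v) (Xc ta ha lam (forget X) v) \<le> 1"
  proof -
    have car: "Xc ta ha lam (forget X) v \<in> carrier_mat (fst (forget X) v) (fst (forget X) v)"
      by (simp add: Xc_def)
    show ?thesis
    proof (cases "fst X None = 0")
      case True
      have ee: "Xc ta ha lam (forget X) v $$ (p,q) = 0" if "p < fst X (Some v)" "q < fst X (Some v)" for p q
        using ent[OF that] mult_entry[OF c(1) c(2) that] True by simp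
      show ?thesis
        by (rule vec_space.rank_le_1_product_entries[OF car, of "\<lambda>_. 0" "\<lambda>_. 0"]) (use car in \<open>auto simp: forget_fst intro: ee\<close>)
    next
      case False
      then have d1: "fst X None = 1" using dinf by simp
      have ee: "Xc ta ha lam (forget X) v $$ (p,q) = - (snd X None False $$ (p,0) * snd X None True $$ (0,q))"
        if "p < fst X (Some v)" "q < fst X (Some v)" for p q
        using ent[OF that] mult_entry[OF c(1) c(2) that] d1 by simp
      show ?thesis
        by (rule vec_space.rank_le_1_product_entries[OF car, of "\<lambda>r. - snd X None False $$ (r,0)" "\<lambda>c. snd X None True $$ (0,c)"])
          (use car in \<open>auto simp: forget_fst intro: ee\<close>)
    qed
  qed
  show ?thesis unfolding is_nearly_def using r1 r2 r3 r4 by blast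
qed

lemma part_mor:
  fixes ta ha :: "'e::finite \<Rightarrow> 'v" and f :: "'v option \<Rightarrow> 'k::field mat"
  assumes h: "is_hom (tl_inf ta) (hd_inf ha v) X Y f"
  shows "is_hom ta ha (forget X) (forget Y) (forget_hom f)"
proof -
  have "f (Some (ha a)) * snd X (Some a) False = snd Y (Some a) False * f (Some (ta a)) \<and>
        f (Some (ta a)) * snd X (Some a) True = snd Y (Some a) True * f (Some (ha a))" for a
    using h unfolding is_hom_def by (auto simp: tl_inf_def hd_inf_def dest: spec[of _ "Some a"])
  moreover have "f (Some i) \<in> carrier_mat (fst Y (Some i)) (fst X (Some i))" for i
    using h unfolding is_hom_def by auto
  ultimately show ?thesis unfolding is_hom_def forget_def forget_hom_def by auto
qed

lemma part_faithful:
  fixes ta ha :: "'e::finite \<Rightarrow> 'v" and lam :: "'v \<Rightarrow> 'k::field"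
  assumes CX: "C_obj ta ha lam v X" and CY: "C_obj ta ha lam v Y"
    and hf: "is_hom (tl_inf ta) (hd_inf ha v) X Y f" and hg: "is_hom (tl_inf ta) (hd_inf ha v) X Y g"
    and e: "forget_hom f = forget_hom g"
  shows "f = g"
proof
  fix i
  show "f i = g i"
  proof (cases i)
    case (Some j)
    then show ?thesis using fun_cong[OF e, of j] by (simp add: forget_hom_def)
  next
    case None
    have cf: "f None \<in> carrier_mat (fst Y None) (fst X None)" and cg: "g None \<in> carrier_mat (fst Y None) (fst X None)"
      using hf hg unfolding is_hom_def by auto
    have dX: "fst X None \<le> 1" and dY: "fst Y None \<le> 1" using CX CY unfolding C_obj_def by auto
    show ?thesis
    proof (cases "fst X None = 0 \<or> fst Y None = 0")
      case True
      then show ?thesis using None cf cg zero_rows_eq zero_cols_eq by metis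
    next
      case False
      then have d: "fst X None = 1" "fst Y None = 1" using dX dY by auto
      obtain q where q: "q < fst X (Some v)" "snd X None True $$ (0,q) \<noteq> 0"
        using Cobj_B_nz[OF CX d(1)] by auto
      have "f None * snd X None True = snd Y None True * f (Some v)"
        using hf unfolding is_hom_def by (auto simp: tl_inf_def hd_inf_def dest: spec[of _ None])
      moreover have "g None * snd X None True = snd Y None True * g (Some v)"
        using hg unfolding is_hom_def by (auto simp: tl_inf_def hd_inf_def dest: spec[of _ None])
      moreover have "f (Some v) = g (Some v)" using fun_cong[OF e, of v] by (simp add: forget_hom_def)
      ultimately have eq: "f None * snd X None True = g None * snd X None True" by simp
      have cB: "snd X None True \<in> carrier_mat (fst X None) (fst X (Some v))"
        using rep_inf_carrier(2)[OF Cobj_rep[OF CX]] by simp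
      have "(f None * snd X None True) $$ (0,q) = f None $$ (0,0) * snd X None True $$ (0,q)"
        using mult_entry[OF cf cB _ q(1), of 0] d by simp
      moreover have "(g None * snd X None True) $$ (0,q) = g None $$ (0,0) * snd X None True $$ (0,q)"
        using mult_entry[OF cg cB _ q(1), of 0] d by simp
      ultimately have "f None $$ (0,0) = g None $$ (0,0)" using eq q by simp
      then show ?thesis using None cf cg d by (intro eq_matI) auto
    qed
  qed
qed


lemma rep_forget: assumes "is_rep (tl_inf ta) (hd_inf ha v) X" shows "is_rep ta ha (forget X)"
  using rep_inf_carrier(3,4)[OF assms] unfolding is_rep_def forget_def by auto

lemma Xc_forget_v:
  fixes ta ha :: "'e::finite \<Rightarrow> 'v" and lam :: "'v \<Rightarrow> 'k::field"
  assumes C: "C_obj ta ha lam v X"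
  shows "Xc ta ha lam (forget X) v = - (snd X None False * snd X None True)"
proof -
  note c = rep_inf_carrier[OF Cobj_rep[OF C]]
  have Xc0: "Xc (tl_inf ta) (hd_inf ha v) (lam_inf lam) X i = 0\<^sub>m (fst X i) (fst X i)" for i
    using C unfolding C_obj_def is_Pi_module_def by auto
  have ent: "Xc ta ha lam (forget X) v $$ (p,q) = - (snd X None False * snd X None True) $$ (p,q)"
    if "p < fst X (Some v)" "q < fst X (Some v)" for p q
    using Xc_Some[OF that, of ta ha v lam] Xc0[of "Some v"] that by (simp add: eq_neg_iff_add_eq_0)
  show ?thesis
    by (rule eq_matI) (use ent c(1,2) in \<open>auto simp: Xc_def forget_fst\<close>)
qed

lemma part_full:
  fixes ta ha :: "'e::finite \<Rightarrow> 'v" and lam :: "'v \<Rightarrow> 'k::field"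
  assumes CX: "C_obj ta ha lam v X" and CY: "C_obj ta ha lam v Y"
    and hg: "is_hom ta ha (forget X) (forget Y) g"
  shows "\<exists>f. is_hom (tl_inf ta) (hd_inf ha v) X Y f \<and> forget_hom f = g"
proof -
  have rX: "is_rep (tl_inf ta) (hd_inf ha v) X" and rY: "is_rep (tl_inf ta) (hd_inf ha v) Y"
    using Cobj_rep[OF CX] Cobj_rep[OF CY] by auto
  note cX = rep_inf_carrier[OF rX] and cY = rep_inf_carrier[OF rY]
  have cg: "g j \<in> carrier_mat (fst Y (Some j)) (fst X (Some j))" for j
    using hg unfolding is_hom_def by (auto simp: forget_fst)
  have hgs: "g (ha a) * snd X (Some a) False = snd Y (Some a) False * g (ta a) \<and>
         g (ta a) * snd X (Some a) True = snd Y (Some a) True * g (ha a)" for a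
    using hg unfolding is_hom_def by (auto simp: forget_snd)
  define nX where "nX = fst X None"
  define nY where "nY = fst Y None"
  have nX1: "nX \<le> 1" and nY1: "nY \<le> 1" using CX CY unfolding C_obj_def nX_def nY_def by auto
  define u where "u = g v * snd X None False"
  define x where "x = snd X None True"
  define y where "y = snd Y None False"
  define w where "w = snd Y None True * g v"
  have cu: "u \<in> carrier_mat (fst Y (Some v)) nX" unfolding u_def nX_def using cg[of v] cX(1) by auto
  have cx: "x \<in> carrier_mat nX (fst X (Some v))" unfolding x_def nX_def using cX(2) by auto
  have cy: "y \<in> carrier_mat (fst Y (Some v)) nY" unfolding y_def nY_def using cY(1) by auto
  have cw: "w \<in> carrier_mat nY (fst X (Some v))" unfolding w_def nY_def using cg[of v] cY(2) by auto
  have "g v * Xc ta ha lam (forget X) v = Xc ta ha lam (forget Y) v * g v"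
    by (rule hom_Xc[OF rep_forget[OF rX] rep_forget[OF rY] hg])
  then have "g v * (snd X None False * snd X None True) = (snd Y None False * snd Y None True) * g v"
    unfolding Xc_forget_v[OF CX] Xc_forget_v[OF CY]
    apply (subst (asm) uminus_mult_right_mat)
     apply (use cg[of v] cX(1) in auto)[1]
    apply (subst (asm) uminus_mult_left_mat)
     apply (use cg[of v] cY(2) in auto)[1]
    by simp
  then have UX: "u * x = y * w"
    unfolding u_def x_def y_def w_def
    using assoc_mult_mat[OF cg[of v] cX(1) cX(2)] assoc_mult_mat[OF cY(1) cY(2) cg[of v]] by simp
  have E: "(\<Sum>k=0..<nX. u $$ (p,k) * x $$ (k,q)) = (\<Sum>l=0..<nY. y $$ (p,l) * w $$ (l,q))"
    if "p < fst Y (Some v)" "q < fst X (Some v)" for p q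
    using mult_entry[OF cu cx that] mult_entry[OF cy cw that] UX by simp
  obtain q0 where q0: "nX = 1 \<Longrightarrow> q0 < fst X (Some v) \<and> x $$ (0,q0) \<noteq> 0"
    using Cobj_B_nz[OF CX] unfolding nX_def x_def by blast
  obtain p0 where p0: "nY = 1 \<Longrightarrow> p0 < fst Y (Some v) \<and> y $$ (p0,0) \<noteq> 0"
    using Cobj_A_nz[OF CY] unfolding nY_def y_def by blast
  define c :: "'k mat" where "c = mat nY nX (\<lambda>_. w $$ (0,q0) / x $$ (0,q0))"
  have cc: "c \<in> carrier_mat nY nX" unfolding c_def by simp
  have cent: "c $$ (l,k) = w $$ (0,q0) / x $$ (0,q0)" if "l < nY" "k < nX" for l k
    using that by (simp add: c_def)
  have a: "u = y * c"
  proof (rule eq_matI)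
    fix p k assume p: "p < dim_row (y * c)" and k: "k < dim_col (y * c)"
    then have p': "p < fst Y (Some v)" and k': "k < nX" using cy cc by auto
    then have nx: "nX = 1" and k0: "k = 0" using nX1 by auto
    have m1: "(y * c) $$ (p,k) = (\<Sum>l=0..<nY. y $$ (p,l) * c $$ (l,k))"
      by (rule mult_entry[OF cy cc p' k'])
    have E': "u $$ (p,0) * x $$ (0,q0) = (\<Sum>l=0..<nY. y $$ (p,l) * w $$ (l,q0))"
      using E[OF p'] q0 nx by simp
    show "u $$ (p,k) = (y * c) $$ (p,k)"
    proof (cases nY)
      case 0
      have "(y * c) $$ (p,k) = 0" using m1 0 by simp
      moreover have "u $$ (p,0) * x $$ (0,q0) = 0" using E' 0 by simp
      ultimately show ?thesis using q0 nx k0 by simp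
    next
      case (Suc n)
      then have ny: "nY = 1" using nY1 by simp
      have "(y * c) $$ (p,k) = y $$ (p,0) * (w $$ (0,q0) / x $$ (0,q0))"
        using m1 cent[of 0 k] ny k' by simp
      moreover have "u $$ (p,0) * x $$ (0,q0) = y $$ (p,0) * w $$ (0,q0)" using E' ny by simp
      ultimately have "u $$ (p,0) * x $$ (0,q0) = (y * c) $$ (p,0) * x $$ (0,q0)"
        using q0 nx k0 by (simp add: field_simps)
      then show ?thesis using q0 nx k0 by simp
    qed
  qed (use cu cy cc in auto)
  have b: "c * x = w"
  proof (rule eq_matI)
    fix l q assume l: "l < dim_row w" and q: "q < dim_col w"
    then have l': "l < nY" and q': "q < fst X (Some v)" using cw by auto
    then have ny: "nY = 1" and l0: "l = 0" using nY1 by auto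
    have m1: "(c * x) $$ (l,q) = (\<Sum>k=0..<nX. c $$ (l,k) * x $$ (k,q))"
      by (rule mult_entry[OF cc cx l' q'])
    have Eq: "(\<Sum>k=0..<nX. u $$ (p0,k) * x $$ (k,q)) = y $$ (p0,0) * w $$ (0,q)"
      using E[OF _ q'] p0 ny by simp
    show "(c * x) $$ (l,q) = w $$ (l,q)"
    proof (cases nX)
      case 0
      have "(c * x) $$ (l,q) = 0" using m1 0 by simp
      moreover have "y $$ (p0,0) * w $$ (0,q) = 0" using Eq 0 by simp
      ultimately show ?thesis using p0 ny l0 by simp
    next
      case (Suc n)
      then have nx: "nX = 1" using nX1 by simp
      have Eq0: "u $$ (p0,0) * x $$ (0,q0) = y $$ (p0,0) * w $$ (0,q0)"
        using E[of p0 q0] p0 q0 ny nx by simp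
      have Eq1: "u $$ (p0,0) * x $$ (0,q) = y $$ (p0,0) * w $$ (0,q)"
        using Eq nx by simp
      have "(c * x) $$ (l,q) = (w $$ (0,q0) / x $$ (0,q0)) * x $$ (0,q)"
        using m1 cent[of l 0] nx l' by simp
      also have "\<dots> = w $$ (0,q)"
      proof -
        have yz: "y $$ (p0,0) \<noteq> 0" and xz: "x $$ (0,q0) \<noteq> 0" using p0 ny q0 nx by auto
        have "w $$ (0,q0) = u $$ (p0,0) * x $$ (0,q0) / y $$ (p0,0)" using Eq0 yz by (simp add: field_simps)
        moreover have "w $$ (0,q) = u $$ (p0,0) * x $$ (0,q) / y $$ (p0,0)" using Eq1 yz by (simp add: field_simps)
        ultimately show ?thesis using xz by (simp add: field_simps)
      qed
      finally show ?thesis using l0 by simp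
    qed
  qed (use cc cx cw in auto)
  define f where "f i = (case i of None \<Rightarrow> c | Some j \<Rightarrow> g j)" for i
  have "is_hom (tl_inf ta) (hd_inf ha v) X Y f"
    unfolding is_hom_def
  proof (rule conjI[OF allI allI])
    fix i show "f i \<in> carrier_mat (fst Y i) (fst X i)"
      using cc cg by (cases i) (auto simp: f_def nX_def nY_def)
  next
    fix a :: "'e option"
    show "f (hd_inf ha v a) * snd X a False = snd Y a False * f (tl_inf ta a) \<and>
          f (tl_inf ta a) * snd X a True = snd Y a True * f (hd_inf ha v a)"
      using a b hgs unfolding u_def x_def y_def w_def
      by (cases a) (auto simp: f_def tl_inf_def hd_inf_def)
  qed
  moreover have "forget_hom f = g" by (auto simp: forget_hom_def f_def)
  ultimately show ?thesis by blast
qed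


lemma rep_iso_refl:
  fixes Y :: "('v, 'e, 'k::field) rep"
  assumes r: "is_rep ta ha Y"
  shows "rep_iso ta ha Y Y"
proof -
  define f :: "'v \<Rightarrow> 'k mat" where "f i = 1\<^sub>m (fst Y i)" for i
  have c: "snd Y a False \<in> carrier_mat (fst Y (ha a)) (fst Y (ta a))"
      "snd Y a True \<in> carrier_mat (fst Y (ta a)) (fst Y (ha a))" for a
    using r unfolding is_rep_def by auto
  have "is_hom ta ha Y Y f"
    unfolding is_hom_def f_def
    by (auto simp: left_mult_one_mat[OF c(1)] right_mult_one_mat[OF c(1)] left_mult_one_mat[OF c(2)] right_mult_one_mat[OF c(2)])
  moreover have "f i * f i = 1\<^sub>m (fst Y i)" for i by (simp add: f_def)
  ultimately show ?thesis unfolding rep_iso_def by blast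
qed

lemma part_ess:
  fixes ta ha :: "'e::finite \<Rightarrow> 'v::finite" and lam :: "'v \<Rightarrow> 'k::field"
  assumes N: "is_nearly ta ha lam v Y"
  shows "\<exists>X. C_obj ta ha lam v X \<and> rep_iso ta ha (forget X) Y"
proof -
  have rY: "is_rep ta ha Y" and sY: "(\<Sum>i\<in>UNIV. lam i * of_nat (fst Y i)) = 0"
    and zY: "\<And>i. i \<noteq> v \<Longrightarrow> Xc ta ha lam Y i = 0\<^sub>m (fst Y i) (fst Y i)"
    and rk: "vec_space.rank (fst Y v) (Xc ta ha lam Y v) \<le> 1"
    using N unfolding is_nearly_def by auto
  have cY: "snd Y a False \<in> carrier_mat (fst Y (ha a)) (fst Y (ta a))"
      "snd Y a True \<in> carrier_mat (fst Y (ta a)) (fst Y (ha a))" for a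
    using rY unfolding is_rep_def by auto
  define nv where "nv = fst Y v"
  define M where "M = Xc ta ha lam Y v"
  have cM: "M \<in> carrier_mat nv nv" by (simp add: M_def nv_def Xc_def)
  obtain fr gc where fg: "\<And>i j. i < nv \<Longrightarrow> j < nv \<Longrightarrow> M $$ (i,j) = fr i * gc j"
    using vec_space.rank_le1_decomp[OF cM] rk unfolding M_def nv_def by blast
  have trM: "(\<Sum>p=0..<nv. M $$ (p,p)) = 0"
  proof -
    have "(\<Sum>i\<in>UNIV. \<Sum>p=0..<fst Y i. Xc ta ha lam Y i $$ (p,p)) = 0"
      using trace_sum[OF rY, of lam] sY by simp
    moreover have "(\<Sum>i\<in>UNIV. \<Sum>p=0..<fst Y i. Xc ta ha lam Y i $$ (p,p))
        = (\<Sum>p=0..<fst Y v. Xc ta ha lam Y v $$ (p,p)) + (\<Sum>i\<in>UNIV - {v}. \<Sum>p=0..<fst Y i. Xc ta ha lam Y i $$ (p,p))"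
      by (subst sum.remove[of UNIV v]) auto
    moreover have "(\<Sum>i\<in>UNIV - {v}. \<Sum>p=0..<fst Y i. Xc ta ha lam Y i $$ (p,p)) = 0"
      by (intro sum.neutral ballI) (simp add: zY)
    ultimately show ?thesis by (simp add: M_def nv_def)
  qed
  define d :: nat where "d = (if \<forall>i<nv. \<forall>j<nv. M $$ (i,j) = 0 then 0 else 1)"
  define A :: "'k mat" where "A = mat nv d (\<lambda>(r,_). - fr r)"
  define B :: "'k mat" where "B = mat d nv (\<lambda>(_,c). gc c)"
  have cA: "A \<in> carrier_mat nv d" and cB: "B \<in> carrier_mat d nv" by (auto simp: A_def B_def)
  have d1: "d \<le> 1" by (simp add: d_def)
  have nz: "d = 1 \<Longrightarrow> \<exists>r0 c0. r0 < nv \<and> c0 < nv \<and> fr r0 \<noteq> 0 \<and> gc c0 \<noteq> 0"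
    using fg unfolding d_def by (auto split: if_splits)
  have M0: "d = 0 \<Longrightarrow> i < nv \<Longrightarrow> j < nv \<Longrightarrow> M $$ (i,j) = 0" for i j
    unfolding d_def by (auto split: if_splits)
  define X :: "('v option, 'e option, 'k) rep" where
    "X = (\<lambda>i. case i of None \<Rightarrow> d | Some j \<Rightarrow> fst Y j,
          \<lambda>a b. case a of None \<Rightarrow> (if b then B else A) | Some a' \<Rightarrow> snd Y a' b)"
  have fX: "forget X = Y" by (cases Y) (auto simp: forget_def X_def comp_def)
  have X1: "fst X None = d" "fst X (Some j) = fst Y j" "snd X None False = A" "snd X None True = B"
      "snd X (Some a) b = snd Y a b" for j a b
    by (auto simp: X_def)
  have rX: "is_rep (tl_inf ta) (hd_inf ha v) X"
    unfolding is_rep_def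
  proof
    fix a show "snd X a False \<in> carrier_mat (fst X (hd_inf ha v a)) (fst X (tl_inf ta a)) \<and>
        snd X a True \<in> carrier_mat (fst X (tl_inf ta a)) (fst X (hd_inf ha v a))"
      using cA cB cY by (cases a) (auto simp: X1 tl_inf_def hd_inf_def nv_def)
  qed
  have AB: "(A * B) $$ (p,q) = - M $$ (p,q)" if "p < nv" "q < nv" for p q
  proof -
    have "(A * B) $$ (p,q) = (\<Sum>k=0..<d. A $$ (p,k) * B $$ (k,q))" by (rule mult_entry[OF cA cB that])
    also have "\<dots> = - M $$ (p,q)"
    proof (cases "d = 0")
      case True then show ?thesis using M0 that by simp
    next
      case False then have "d = 1" using d1 by simp
      then show ?thesis using that fg by (simp add: A_def B_def)
    qed
    finally show ?thesis .
  qed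
  have BA: "(B * A) $$ (0,0) = - (\<Sum>p=0..<nv. M $$ (p,p))" if "d = 1"
  proof -
    have "(B * A) $$ (0,0) = (\<Sum>k=0..<nv. B $$ (0,k) * A $$ (k,0))" by (rule mult_entry[OF cB cA]) (use that in auto)
    also have "\<dots> = (\<Sum>k=0..<nv. - M $$ (k,k))"
      by (intro sum.cong refl) (use that fg in \<open>auto simp: A_def B_def\<close>)
    finally show ?thesis by (simp add: sum_negf)
  qed
  have Xc0: "Xc (tl_inf ta) (hd_inf ha v) (lam_inf lam) X i = 0\<^sub>m (fst X i) (fst X i)" for i
  proof (rule eq_matI)
    fix p q assume "p < dim_row (0\<^sub>m (fst X i) (fst X i) :: 'k mat)" "q < dim_col (0\<^sub>m (fst X i) (fst X i) :: 'k mat)"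
    then have pq: "p < fst X i" "q < fst X i" by auto
    show "Xc (tl_inf ta) (hd_inf ha v) (lam_inf lam) X i $$ (p,q) = 0\<^sub>m (fst X i) (fst X i) $$ (p,q)"
    proof (cases i)
      case None
      then have "d = 1" "p = 0" "q = 0" using pq d1 by (auto simp: X1)
      then show ?thesis using Xc_None[of p X q ta ha v lam] pq None BA trM by (simp add: X1)
    next
      case (Some j)
      have e: "Xc (tl_inf ta) (hd_inf ha v) (lam_inf lam) X (Some j) $$ (p,q)
        = Xc ta ha lam Y j $$ (p,q) + (if j = v then (A * B) $$ (p,q) else 0)"
        using Xc_Some[of p X j q ta ha v lam] pq Some fX by (simp add: X1)
      show ?thesis
      proof (cases "j = v")
        case True
        then show ?thesis using e AB[of p q] pq Some by (simp add: X1 M_def nv_def)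
      next
        case False
        then show ?thesis using e zY[OF False] pq Some by (simp add: X1)
      qed
    qed
  qed (auto simp: Xc_def)
  have hom1: "f = zero_hom X (S_inf ta ha v)" if h: "is_hom (tl_inf ta) (hd_inf ha v) X (S_inf ta ha v) f" for f
  proof
    fix i
    have cf: "f i \<in> carrier_mat (S_dim i) (fst X i)" for i using h unfolding is_hom_def by auto
    show "f i = zero_hom X (S_inf ta ha v) i"
    proof (cases i)
      case (Some j) then show ?thesis using cf[of i] by (intro zero_rows_eq) (auto simp: zero_hom_def S_dim_def)
    next
      case None
      show ?thesis
      proof (cases "d = 0")
        case True then show ?thesis using cf[of i] None by (intro zero_cols_eq) (auto simp: zero_hom_def S_dim_def X1)
      next
        case False
        then have d: "d = 1" using d1 by simp
        obtain r0 c0 where rc: "r0 < nv" "c0 < nv" "fr r0 \<noteq> 0" "gc c0 \<noteq> 0" using nz[OF d] by auto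
        have "f None * B = 0\<^sub>m 1 0 * f (Some v)"
          using h unfolding is_hom_def by (auto simp: X1 tl_inf_def hd_inf_def S_dim_def dest: spec[of _ None])
        also have "\<dots> = 0\<^sub>m 1 nv" using cf[of "Some v"] by (intro inner0_mult) (auto simp: S_dim_def X1 nv_def)
        finally have "(f None * B) $$ (0,c0) = 0" using rc by simp
        moreover have "(f None * B) $$ (0,c0) = f None $$ (0,0) * gc c0"
        proof -
          have cB': "B \<in> carrier_mat (fst X None) nv" using cB by (simp add: X1)
          show ?thesis using mult_entry[OF cf[of None] cB' _ rc(2), of 0] d by (simp add: S_dim_def B_def rc X1)
        qed
        ultimately have "f None $$ (0,0) = 0" using rc by simp
        then show ?thesis using cf[of None] None d by (intro eq_matI) (auto simp: zero_hom_def S_dim_def X1)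
      qed
    qed
  qed
  have hom2: "f = zero_hom (S_inf ta ha v) X" if h: "is_hom (tl_inf ta) (hd_inf ha v) (S_inf ta ha v) X f" for f
  proof
    fix i
    have cf: "f i \<in> carrier_mat (fst X i) (S_dim i)" for i using h unfolding is_hom_def by auto
    show "f i = zero_hom (S_inf ta ha v) X i"
    proof (cases i)
      case (Some j) then show ?thesis using cf[of i] by (intro zero_cols_eq) (auto simp: zero_hom_def S_dim_def)
    next
      case None
      show ?thesis
      proof (cases "d = 0")
        case True then show ?thesis using cf[of i] None by (intro zero_rows_eq) (auto simp: zero_hom_def S_dim_def X1)
      next
        case False
        then have d: "d = 1" using d1 by simp
        obtain r0 c0 where rc: "r0 < nv" "c0 < nv" "fr r0 \<noteq> 0" "gc c0 \<noteq> 0" using nz[OF d] by auto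
        have "A * f None = f (Some v) * 0\<^sub>m 0 1"
          using h unfolding is_hom_def by (auto simp: X1 tl_inf_def hd_inf_def S_dim_def dest: spec[of _ None])
        also have "\<dots> = 0\<^sub>m nv 1" using cf[of "Some v"] by (intro inner0_mult) (auto simp: S_dim_def X1 nv_def)
        finally have "(A * f None) $$ (r0,0) = 0" using rc by simp
        moreover have "(A * f None) $$ (r0,0) = - fr r0 * f None $$ (0,0)"
        proof -
          have cf': "f None \<in> carrier_mat d 1" using cf[of None] by (simp add: X1 S_dim_def)
          show ?thesis using mult_entry[OF cA cf' rc(1), of 0] d by (simp add: A_def rc)
        qed
        ultimately have "f None $$ (0,0) = 0" using rc by simp
        then show ?thesis using cf[of None] None d by (intro eq_matI) (auto simp: zero_hom_def S_dim_def X1)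
      qed
    qed
  qed
  have "C_obj ta ha lam v X"
    unfolding C_obj_def is_Pi_module_def using rX Xc0 hom1 hom2 d1 by (auto simp: X1)
  moreover have "rep_iso ta ha (forget X) Y" unfolding fX by (rule rep_iso_refl[OF rY])
  ultimately show ?thesis by blast
qed


theorem lemma3p2:
  fixes ta ha :: "'e::finite \<Rightarrow> 'v::finite"
    and v :: 'v
    and lam :: "'v \<Rightarrow> 'k::field"
  assumes "alg_closed TYPE('k)"
  shows
    \<comment> \<open>the functor is well defined on objects\<close>
    "(\<forall>X. C_obj ta ha lam v X \<longrightarrow> is_nearly ta ha lam v (forget X))
     \<comment> \<open>and on morphisms\<close>
   \<and> (\<forall>X Y f. C_obj ta ha lam v X \<longrightarrow> C_obj ta ha lam v Y
        \<longrightarrow> is_hom (tl_inf ta) (hd_inf ha v) X Y f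
        \<longrightarrow> is_hom ta ha (forget X) (forget Y) (forget_hom f))
     \<comment> \<open>faithful\<close>
   \<and> (\<forall>X Y f g. C_obj ta ha lam v X \<longrightarrow> C_obj ta ha lam v Y
        \<longrightarrow> is_hom (tl_inf ta) (hd_inf ha v) X Y f
        \<longrightarrow> is_hom (tl_inf ta) (hd_inf ha v) X Y g
        \<longrightarrow> forget_hom f = forget_hom g \<longrightarrow> f = g)
     \<comment> \<open>full\<close>
   \<and> (\<forall>X Y g. C_obj ta ha lam v X \<longrightarrow> C_obj ta ha lam v Y
        \<longrightarrow> is_hom ta ha (forget X) (forget Y) g
        \<longrightarrow> (\<exists>f. is_hom (tl_inf ta) (hd_inf ha v) X Y f \<and> forget_hom f = g))
     \<comment> \<open>essentially surjective\<close>
   \<and> (\<forall>Y. is_nearly ta ha lam v Y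
        \<longrightarrow> (\<exists>X. C_obj ta ha lam v X \<and> rep_iso ta ha (forget X) Y))"
    using part_obj[of ta ha lam v] part_mor[of ta ha v] part_faithful[of ta ha lam v] part_full[of ta ha lam v] part_ess[of ta ha lam v]
  by blast

end
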